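(* Let $Y,X$ be locally compact Hausdorff spaces, $r\colon Y\to X$ continuous, and $\Lambda\colon C_c(Y)\to C_c(X)$ a positive linear map. Then $\Lambda(f)(x)=0$ for all $f\in C_c(Y)$ and $x\in X$ with $f|_{r^{-1}(x)}=0$ if and only if $\Lambda(f\cdot(g\circ r))=\Lambda(f)g$ for all $f\in C_c(Y)$ and $g\in C_c(X)$. *)

theory Defs
  imports "HOL-Analysis.Analysis"
begin

text \<open>Functions are required to vanish outside the carrier (topspace X), so that each element
  of C_c(X) has a unique representative.\<close>
definition Cc :: "'a topology \<Rightarrow> ('a \<Rightarrow> complex) set" where
  "Cc X = {f. continuous_map X euclidean f
              \<and> compactin X (X closure_of {x \<in> topspace X. f x \<noteq> 0})
              \<and> (\<forall>x. x \<notin> topspace X \<longrightarrow> f x = 0)}"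

definition nonneg_fun :: "('a \<Rightarrow> complex) \<Rightarrow> bool" where
  "nonneg_fun f \<longleftrightarrow> (\<forall>x. Im (f x) = 0 \<and> 0 \<le> Re (f x))"

definition positive_linear_Cc ::
  "'b topology \<Rightarrow> 'a topology \<Rightarrow> (('b \<Rightarrow> complex) \<Rightarrow> ('a \<Rightarrow> complex)) \<Rightarrow> bool" where
  "positive_linear_Cc Y X L \<longleftrightarrow>
     (\<forall>f\<in>Cc Y. L f \<in> Cc X)
   \<and> (\<forall>f\<in>Cc Y. \<forall>g\<in>Cc Y. L (\<lambda>y. f y + g y) = (\<lambda>x. L f x + L g x))
   \<and> (\<forall>c. \<forall>f\<in>Cc Y. L (\<lambda>y. c * f y) = (\<lambda>x. c * L f x))
   \<and> (\<forall>f\<in>Cc Y. nonneg_fun f \<longrightarrow> nonneg_fun (L f))"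

end

theory Submission
  imports Defs
begin

lemma urysohn_cc:
  assumes lc: "locally_compact_space X" and H: "Hausdorff_space X"
    and K: "compactin X K" and W: "openin X W" and KW: "K \<subseteq> W"
  obtains f :: "'a \<Rightarrow> real" where "continuous_map X euclideanreal f"
    "\<And>x. 0 \<le> f x" "\<And>x. f x \<le> 1" "\<And>x. x \<in> K \<Longrightarrow> f x = 1" "\<And>x. x \<notin> W \<Longrightarrow> f x = 0"
    "compactin X (X closure_of {x \<in> topspace X. f x \<noteq> 0})"
proof -
  have lcW: "locally_compact_space (subtopology X W)"
    using locally_compact_space_open_subset H lc W by blast
  have HW: "Hausdorff_space (subtopology X W)" using Hausdorff_space_subtopology H by blast
  have "compactin (subtopology X W) K" using K KW by (simp add: compactin_subtopology)
  then obtain U L where U: "openin (subtopology X W) U" and L: "compactin (subtopology X W) L"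
      "K \<subseteq> U" "U \<subseteq> L"
    using locally_compact_space_compact_closed_compact[of "subtopology X W"] lcW HW by blast
  have UX: "openin X U" using U W openin_open_subtopology by blast
  have LX: "compactin X L" "L \<subseteq> W" using L by (auto simp: compactin_subtopology)
  have LC: "closedin X L" using compactin_imp_closedin H LX by blast
  have LT: "L \<subseteq> topspace X" using LC closedin_subset by blast
  have KC: "closedin X K" using compactin_imp_closedin H K by blast
  have "normal_space (subtopology X L)"
    by (meson H Hausdorff_space_subtopology LX(1) compact_Hausdorff_or_regular_imp_normal_space compact_space_subtopology)
  moreover have "closedin (subtopology X L) K"
    using KC L(2) L(3) closedin_subset_topspace by blast
  moreover have "closedin (subtopology X L) (L - U)"
    by (simp add: LC UX closedin_diff closedin_subset_topspace)
  moreover have "disjnt (L - U) K" using L by (auto simp: disjnt_def)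
  ultimately obtain g :: "'a \<Rightarrow> real" where g: "continuous_map (subtopology X L) (top_of_set {0..1}) g"
      "g ` (L - U) \<subseteq> {0}" "g ` K \<subseteq> {1}"
    using Urysohn_lemma [of "subtopology X L" "L-U" K 0 1] by auto
  have gc: "continuous_map (subtopology X L) euclidean g" and gr: "\<And>x. x \<in> L \<Longrightarrow> g x \<in> {0..1}"
    using g(1) LT by (auto simp: continuous_map_in_subtopology image_subset_iff Int_absorb1)
  define f where "f x = (if x \<in> L then g x else 0)" for x
  show ?thesis
  proof
    show "continuous_map X euclideanreal f"
      unfolding continuous_map_closedin
    proof (intro strip conjI)
      fix C :: "real set"
      assume C: "closedin euclidean C"
      have eq: "{x \<in> topspace X. f x \<in> C} = {x \<in> L. g x \<in> C} \<union> (if 0 \<in> C then topspace X - U else {})"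
        using \<open>U \<subseteq> L\<close> LT g(2) by (auto simp: f_def)
      show "closedin X {x \<in> topspace X. f x \<in> C}"
        unfolding eq
      proof (intro closedin_Un)
        have "closedin (subtopology X L) {x \<in> L. g x \<in> C}"
          using closedin_continuous_map_preimage_gen [OF gc] LT C by auto
        then show "closedin X {x \<in> L. g x \<in> C}"
          using LC closedin_trans_full by blast
      qed (use UX in force)
    qed auto
    show "\<And>x. 0 \<le> f x" "\<And>x. f x \<le> 1" using gr by (auto simp: f_def)
    show "\<And>x. x \<in> K \<Longrightarrow> f x = 1" using g(3) L by (auto simp: f_def)
    show "\<And>x. x \<notin> W \<Longrightarrow> f x = 0" using LX by (auto simp: f_def)
    have "{x \<in> topspace X. f x \<noteq> 0} \<subseteq> L" by (auto simp: f_def split: if_splits)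
    then have "X closure_of {x \<in> topspace X. f x \<noteq> 0} \<subseteq> L"
      by (simp add: LC closure_of_minimal)
    then show "compactin X (X closure_of {x \<in> topspace X. f x \<noteq> 0})"
      using LX(1) closed_compactin closedin_closure_of by blast
  qed
qed


lemma cm_cmult:
  fixes f g :: "'a \<Rightarrow> complex"
  shows "continuous_map X euclidean f \<Longrightarrow> continuous_map X euclidean g \<Longrightarrow> continuous_map X euclidean (\<lambda>x. f x * g x)"
  by (simp add: continuous_map_atin tendsto_mult)

lemma cm_Re: "continuous_map X euclidean f \<Longrightarrow> continuous_map X euclideanreal (\<lambda>x. Re (f x))"
  by (simp add: continuous_map_atin tendsto_Re)

lemma cm_Im: "continuous_map X euclidean f \<Longrightarrow> continuous_map X euclideanreal (\<lambda>x. Im (f x))"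
  by (simp add: continuous_map_atin tendsto_Im)

lemma cm_of_real: "continuous_map X euclideanreal f \<Longrightarrow> continuous_map X euclidean (\<lambda>x. complex_of_real (f x))"
  by (simp add: continuous_map_atin tendsto_of_real)

lemma Cc_sub:
  assumes "f \<in> Cc X" "continuous_map X euclidean g" "\<And>x. f x = 0 \<Longrightarrow> g x = 0"
  shows "g \<in> Cc X"
proof -
  have "{x \<in> topspace X. g x \<noteq> 0} \<subseteq> {x \<in> topspace X. f x \<noteq> 0}" using assms(3) by blast
  then have "X closure_of {x \<in> topspace X. g x \<noteq> 0} \<subseteq> X closure_of {x \<in> topspace X. f x \<noteq> 0}"
    by (rule closure_of_mono)
  then have "compactin X (X closure_of {x \<in> topspace X. g x \<noteq> 0})"
    using assms(1) closed_compactin closedin_closure_of unfolding Cc_def by blast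
  then show ?thesis using assms unfolding Cc_def by auto
qed

lemma Lreal:
  assumes pl: "positive_linear_Cc Y X L" and u: "u \<in> Cc Y" and ph: "\<phi> \<in> Cc Y"
    and uI: "\<And>y. Im (u y) = 0" and phn: "nonneg_fun \<phi>" and e: "e \<ge> 0"
    and b: "\<And>y. \<bar>Re (u y)\<bar> \<le> e * Re (\<phi> y)"
  shows "norm (L u x) \<le> e * Re (L \<phi> x)"
proof -
  have add: "\<And>f g. f \<in> Cc Y \<Longrightarrow> g \<in> Cc Y \<Longrightarrow> L (\<lambda>y. f y + g y) = (\<lambda>x. L f x + L g x)"
    and sm: "\<And>c f. f \<in> Cc Y \<Longrightarrow> L (\<lambda>y. c * f y) = (\<lambda>x. c * L f x)"
    and pos: "\<And>f. f \<in> Cc Y \<Longrightarrow> nonneg_fun f \<Longrightarrow> nonneg_fun (L f)"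
    using pl unfolding positive_linear_Cc_def by blast+
  have zero: "u y = 0" if "\<phi> y = 0" for y
    using b[of y] uI[of y] that by (simp add: complex_eq_iff)
  have cu: "continuous_map Y euclidean u" and cph: "continuous_map Y euclidean \<phi>"
    using u ph unfolding Cc_def by auto
  have c1: "(\<lambda>y. complex_of_real e * \<phi> y) \<in> Cc Y"
    by (rule Cc_sub[OF ph]) (auto intro: cm_cmult cph)
  have c2: "(\<lambda>y. c * u y) \<in> Cc Y" for c
    by (rule Cc_sub[OF u]) (auto intro: cm_cmult cu)
  have Lp: "nonneg_fun (L (\<lambda>y. (\<lambda>y. complex_of_real e * \<phi> y) y + (\<lambda>y. c * u y) y))"
    if c: "c = 1 \<or> c = -1" for c
  proof (rule pos)
    show "(\<lambda>y. (\<lambda>y. complex_of_real e * \<phi> y) y + (\<lambda>y. c * u y) y) \<in> Cc Y"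
      by (rule Cc_sub[OF ph]) (auto intro!: continuous_map_add cm_cmult cu cph simp: zero)
    show "nonneg_fun (\<lambda>y. (\<lambda>y. complex_of_real e * \<phi> y) y + (\<lambda>y. c * u y) y)"
      unfolding nonneg_fun_def
    proof
      fix y
      have "\<bar>Re (u y)\<bar> \<le> e * Re (\<phi> y)" "Im (u y) = 0" "Im (\<phi> y) = 0" using b uI phn
        unfolding nonneg_fun_def by auto
      then show "Im (complex_of_real e * \<phi> y + c * u y) = 0 \<and> 0 \<le> Re (complex_of_real e * \<phi> y + c * u y)"
        using c by auto
    qed
  qed
  have "nonneg_fun (L \<phi>)" using pos ph phn by blast
  then have phx: "Im (L \<phi> x) = 0" "Re (L \<phi> x) \<ge> 0" unfolding nonneg_fun_def by auto
  have A: "nonneg_fun (\<lambda>x. complex_of_real e * L \<phi> x + c * L u x)" if "c = 1 \<or> c = -1" for c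
    using Lp[OF that] by (simp add: add[OF c1 c2] sm[OF ph] sm[OF u])
  have A1: "Im (L u x) = 0" "Re (L u x) \<le> e * Re (L \<phi> x)" "- Re (L u x) \<le> e * Re (L \<phi> x)"
    using A[of 1] A[of "-1"] phx unfolding nonneg_fun_def by (auto dest!: spec[of _ x])
  then show ?thesis by (simp add: cmod_def)
qed


lemma Lbound:
  assumes pl: "positive_linear_Cc Y X L" and h: "h \<in> Cc Y" and ph: "\<phi> \<in> Cc Y"
    and phn: "nonneg_fun \<phi>" and e: "e \<ge> 0"
    and b: "\<And>y. norm (h y) \<le> e * Re (\<phi> y)"
  shows "norm (L h x) \<le> 2 * e * Re (L \<phi> x)"
proof -
  have add: "\<And>f g. f \<in> Cc Y \<Longrightarrow> g \<in> Cc Y \<Longrightarrow> L (\<lambda>y. f y + g y) = (\<lambda>x. L f x + L g x)"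
    and sm: "\<And>c f. f \<in> Cc Y \<Longrightarrow> L (\<lambda>y. c * f y) = (\<lambda>x. c * L f x)"
    using pl unfolding positive_linear_Cc_def by blast+
  have ch: "continuous_map Y euclidean h" using h unfolding Cc_def by auto
  define u where "u y = complex_of_real (Re (h y))" for y
  define v where "v y = complex_of_real (Im (h y))" for y
  have u: "u \<in> Cc Y" unfolding u_def
    by (rule Cc_sub[OF h]) (auto intro: cm_of_real[OF cm_Re[OF ch]])
  have v: "v \<in> Cc Y" unfolding v_def
    by (rule Cc_sub[OF h]) (auto intro: cm_of_real[OF cm_Im[OF ch]])
  have cv: "continuous_map Y euclidean v" using v unfolding Cc_def by auto
  have iv: "(\<lambda>y. \<i> * v y) \<in> Cc Y"
    by (rule Cc_sub[OF v]) (auto intro: cm_cmult[OF continuous_map_canonical_const cv])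
  have Lu: "norm (L u x) \<le> e * Re (L \<phi> x)"
    by (rule Lreal[OF pl u ph _ phn e]) (auto simp: u_def intro: order_trans[OF abs_Re_le_cmod b])
  have Lv: "norm (L v x) \<le> e * Re (L \<phi> x)"
    by (rule Lreal[OF pl v ph _ phn e]) (auto simp: v_def intro: order_trans[OF abs_Im_le_cmod b])
  have "h = (\<lambda>y. u y + \<i> * v y)" by (auto simp: u_def v_def complex_eq_iff)
  then have "L h x = L u x + \<i> * L v x" using add[OF u iv] sm[OF v] by simp
  then have "norm (L h x) \<le> norm (L u x) + norm (L v x)"
    by (metis norm_triangle_ineq norm_ii norm_mult mult_1)
  then show ?thesis using Lu Lv by linarith
qed

theorem lemma2p1:
  fixes Y :: "'b topology" and X :: "'a topology"
    and r :: "'b \<Rightarrow> 'a" and L :: "('b \<Rightarrow> complex) \<Rightarrow> ('a \<Rightarrow> complex)"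
  assumes "locally_compact_space Y" and "Hausdorff_space Y"
    and "locally_compact_space X" and "Hausdorff_space X"
    and "continuous_map Y X r"
    and "positive_linear_Cc Y X L"
  shows "(\<forall>f\<in>Cc Y. \<forall>x\<in>topspace X.
            (\<forall>y\<in>topspace Y. r y = x \<longrightarrow> f y = 0) \<longrightarrow> L f x = 0)
     \<longleftrightarrow> (\<forall>f\<in>Cc Y. \<forall>g\<in>Cc X. L (\<lambda>y. f y * g (r y)) = (\<lambda>x. L f x * g x))"
proof -
  note pl = assms(6)
  have LC: "\<And>f. f \<in> Cc Y \<Longrightarrow> L f \<in> Cc X"
    and add: "\<And>f g. f \<in> Cc Y \<Longrightarrow> g \<in> Cc Y \<Longrightarrow> L (\<lambda>y. f y + g y) = (\<lambda>x. L f x + L g x)"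
    and sm: "\<And>c f. f \<in> Cc Y \<Longrightarrow> L (\<lambda>y. c * f y) = (\<lambda>x. c * L f x)"
    and pos: "\<And>f. f \<in> Cc Y \<Longrightarrow> nonneg_fun f \<Longrightarrow> nonneg_fun (L f)"
    using pl unfolding positive_linear_Cc_def by blast+
  have fg: "(\<lambda>y. f y * g (r y)) \<in> Cc Y" if f: "f \<in> Cc Y" and g: "g \<in> Cc X" for f g
  proof (rule Cc_sub[OF f])
    have "continuous_map Y euclidean (g \<circ> r)"
      using g assms(5) continuous_map_compose unfolding Cc_def by blast
    then show "continuous_map Y euclidean (\<lambda>y. f y * g (r y))"
      using f unfolding Cc_def by (auto intro!: cm_cmult simp: o_def)
  qed auto
  show ?thesis
  proof
    assume H: "\<forall>f\<in>Cc Y. \<forall>x\<in>topspace X. (\<forall>y\<in>topspace Y. r y = x \<longrightarrow> f y = 0) \<longrightarrow> L f x = 0"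
    show "\<forall>f\<in>Cc Y. \<forall>g\<in>Cc X. L (\<lambda>y. f y * g (r y)) = (\<lambda>x. L f x * g x)"
    proof (intro ballI ext)
      fix f g x assume f: "f \<in> Cc Y" and g: "g \<in> Cc X"
      show "L (\<lambda>y. f y * g (r y)) x = L f x * g x"
      proof (cases "x \<in> topspace X")
        case True
        have c2: "(\<lambda>y. (- g x) * f y) \<in> Cc Y"
          by (rule Cc_sub[OF f]) (use f in \<open>auto intro!: cm_cmult simp: Cc_def\<close>)
        have hc: "(\<lambda>y. (\<lambda>y. f y * g (r y)) y + (\<lambda>y. (- g x) * f y) y) \<in> Cc Y"
          apply (rule Cc_sub[OF f]) apply (rule continuous_map_add)
          using fg[OF f g] c2 by (auto simp: Cc_def)
        have Z: "L (\<lambda>y. (\<lambda>y. f y * g (r y)) y + (\<lambda>y. (- g x) * f y) y) x = 0"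
          using H hc True by auto
        have Z2: "L (\<lambda>y. f y * g (r y)) x + L (\<lambda>y. (- g x) * f y) x = 0"
          using Z add[OF fg[OF f g] c2] by (simp only:)
        have e1: "L (\<lambda>y. (- g x) * f y) x = (- g x) * L f x" by (simp only: sm[OF f])
        show ?thesis using Z2 unfolding e1 by (simp add: add_eq_0_iff algebra_simps)
      next
        case False
        then show ?thesis using LC[OF fg[OF f g]] g unfolding Cc_def by auto
      qed
    qed
  next
    assume H: "\<forall>f\<in>Cc Y. \<forall>g\<in>Cc X. L (\<lambda>y. f y * g (r y)) = (\<lambda>x. L f x * g x)"
    show "\<forall>f\<in>Cc Y. \<forall>x\<in>topspace X. (\<forall>y\<in>topspace Y. r y = x \<longrightarrow> f y = 0) \<longrightarrow> L f x = 0"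
    proof (intro ballI impI)
      fix f x assume f: "f \<in> Cc Y" and x: "x \<in> topspace X"
        and van: "\<forall>y\<in>topspace Y. r y = x \<longrightarrow> f y = 0"
      have cf: "continuous_map Y euclidean f" and f0: "\<And>y. y \<notin> topspace Y \<Longrightarrow> f y = 0"
        using f unfolding Cc_def by auto
      define S where "S = Y closure_of {y \<in> topspace Y. f y \<noteq> 0}"
      have S: "compactin Y S" using f unfolding Cc_def S_def by auto
      have ST: "S \<subseteq> topspace Y" unfolding S_def by (rule closure_of_subset_topspace)
      obtain pr where pr: "continuous_map Y euclideanreal pr"
        "\<And>x. 0 \<le> pr x" "\<And>x. pr x \<le> 1" "\<And>x. x \<in> S \<Longrightarrow> pr x = 1" "\<And>x. x \<notin> topspace Y \<Longrightarrow> pr x = 0"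
        "compactin Y (Y closure_of {x \<in> topspace Y. pr x \<noteq> 0})"
        using urysohn_cc[OF assms(1,2) S openin_topspace ST] by blast
      define \<phi> where "\<phi> y = complex_of_real (pr y)" for y
      have ph: "\<phi> \<in> Cc Y" using pr unfolding Cc_def \<phi>_def by (auto intro: cm_of_real)
      have phn: "nonneg_fun \<phi>" using pr unfolding nonneg_fun_def \<phi>_def by auto
      define M where "M = Re (L \<phi> x)"
      have M: "M \<ge> 0" using pos[OF ph phn] unfolding nonneg_fun_def M_def by auto
      have key: "norm (L f x) \<le> 2 * e * M" if e: "e > 0" for e
      proof -
        define C where "C = {y \<in> topspace Y. norm (f y) \<in> {e..}}"
        have "closedin Y C" unfolding C_def
          by (rule closedin_continuous_map_preimage) (auto intro: continuous_map_norm cf)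
        moreover have "C \<subseteq> S" unfolding C_def S_def using e
          by (auto intro!: closure_of_subset[THEN subsetD])
        ultimately have "compactin Y C" using S closed_compactin by blast
        then have rC: "compactin X (r ` C)" using image_compactin assms(5) by blast
        have xC: "x \<notin> r ` C" using van e unfolding C_def by auto
        have W: "openin X (topspace X - {x})"
          using assms(4) x by (simp add: Hausdorff_imp_t1_space closedin_t1_singleton openin_diff)
        have "r ` C \<subseteq> topspace X" using assms(5) unfolding C_def
          by (auto dest: continuous_map_image_subset_topspace)
        then have rCW: "r ` C \<subseteq> topspace X - {x}" using xC by blast
        obtain gr where gr: "continuous_map X euclideanreal gr"
          "\<And>x. 0 \<le> gr x" "\<And>x. gr x \<le> 1" "\<And>z. z \<in> r ` C \<Longrightarrow> gr z = 1"
          "\<And>z. z \<notin> topspace X - {x} \<Longrightarrow> gr z = 0"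
          "compactin X (X closure_of {x \<in> topspace X. gr x \<noteq> 0})"
          using urysohn_cc[OF assms(3,4) rC W rCW] by blast
        define g where "g z = complex_of_real (gr z)" for z
        have g: "g \<in> Cc X" using gr unfolding Cc_def g_def by (auto intro: cm_of_real)
        have gx: "g x = 0" using gr(5) by (simp add: g_def)
        have c2: "(\<lambda>y. (-1) * (f y * g (r y))) \<in> Cc Y"
          by (rule Cc_sub[OF fg[OF f g]]) (use fg[OF f g] in \<open>auto intro!: cm_cmult simp: Cc_def\<close>)
        define h where "h y = f y + (-1) * (f y * g (r y))" for y
        have hc: "h \<in> Cc Y" unfolding h_def
          apply (rule Cc_sub[OF f]) apply (rule continuous_map_add)
          using f c2 by (auto simp: Cc_def)
        have Lh: "L h x = L f x"
        proof -
          have a1: "L h x = L f x + L (\<lambda>y. (-1) * (f y * g (r y))) x"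
            unfolding h_def[abs_def] by (simp only: add[OF f c2])
          have a2: "L (\<lambda>y. (-1) * (f y * g (r y))) x = (-1) * L (\<lambda>y. f y * g (r y)) x"
            by (simp only: sm[OF fg[OF f g]])
          have a3: "L (\<lambda>y. f y * g (r y)) x = L f x * g x" using H f g by simp
          show ?thesis using a1 a2 a3 gx by simp
        qed
        have hb: "norm (h y) \<le> e * Re (\<phi> y)" for y
        proof -
          have hy: "h y = f y * (1 - complex_of_real (gr (r y)))" by (simp add: h_def g_def algebra_simps)
          show ?thesis
          proof (cases "y \<in> topspace Y \<and> f y \<noteq> 0")
            case False
            then have "h y = 0" using f0 hy by auto
            then show ?thesis using pr(2) e by (simp add: \<phi>_def)
          next
            case True
            then have yS: "y \<in> S" unfolding S_def by (auto intro!: closure_of_subset[THEN subsetD])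
            show ?thesis
            proof (cases "y \<in> C")
              case True
              then have "h y = 0" using gr(4) hy by auto
              then show ?thesis using pr(2) e by (simp add: \<phi>_def)
            next
              case False
              then have "norm (f y) < e" using True unfolding C_def by auto
              moreover have "norm (1 - complex_of_real (gr (r y))) \<le> 1"
              proof -
                have "1 - complex_of_real (gr (r y)) = complex_of_real (1 - gr (r y))" by simp
                then have "norm (1 - complex_of_real (gr (r y))) = \<bar>1 - gr (r y)\<bar>"
                  by (simp only: norm_of_real)
                then show ?thesis using gr(2,3)[of "r y"] by simp
              qed
              ultimately have "norm (h y) \<le> e" unfolding hy norm_mult
                by (metis less_eq_real_def mult_le_one mult.commute mult_left_le norm_ge_zero order_trans)
              then show ?thesis using pr(4)[OF yS] by (simp add: \<phi>_def)
            qed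
          qed
        qed
        show ?thesis using Lbound[OF pl hc ph phn _ hb, of x] e Lh unfolding M_def by simp
      qed
      show "L f x = 0"
      proof (rule ccontr)
        assume "L f x \<noteq> 0"
        then have a: "norm (L f x) > 0" by simp
        define e where "e = norm (L f x) / (4 * (M + 1))"
        have e: "e > 0" using a M unfolding e_def by simp
        have "2 * e * M < norm (L f x)" unfolding e_def using a M
          by (simp add: field_simps add_pos_nonneg mult_nonneg_nonneg)
        then show False using key[OF e] by simp
      qed
    qed
  qed
qed

end
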